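(* Let $N>1$ be an integer, let $a<b$ be real numbers, and let $\mathcal{X}=(x_1,\dots,x_N)$ be a finite list of $N$ real numbers in $[a,b]$ with mean $\mu=\frac{1}{N}\sum_{i=1}^N x_i$. Let $0<\epsilon<1$ and $0<\delta<1$, and put $$u=\frac{\log(1/\delta)}{2}\cdot\frac{(b-a)^2}{\epsilon^2}.$$ Let $m$ be an integer with $1\le m<N$ and $$m\ \ge\ \min\left\{\frac{u+1}{1+\frac{u}{N}},\ \frac{u+\frac{u}{N}}{1+\frac{u}{N}}\right\}.$$ Let $(X_1,\dots,X_m)$ be a sample of size $m$ drawn uniformly at random without replacement from $\mathcal{X}$. Then $$\mathbb{P}\left[\frac{1}{m}\sum_{t=1}^m X_t-\mu\le \epsilon\right]\ \ge\ 1-\delta .$$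
   Context: Sampling without replacement from the list $\mathcal{X}$ means choosing $m$ distinct indices uniformly at random from $\{1,\dots,N\}$, in order, and setting $X_t$ to be the entry of $\mathcal{X}$ at the $t$-th chosen index. *)

theory Defs
  imports "HOL-Probability.Probability"
begin

definition index_samples :: "nat \<Rightarrow> nat \<Rightarrow> nat list set" where
  "index_samples N m = {is. length is = m \<and> distinct is \<and> set is \<subseteq> {..<N}}"

text \<open>Sampling without replacement of size m from the list X: a uniformly random
  ordered sample of distinct indices, mapped to the entries of X.\<close>
definition sample_wor :: "real list \<Rightarrow> nat \<Rightarrow> real list pmf" where
  "sample_wor X m = map_pmf (map (\<lambda>i. X ! i)) (pmf_of_set (index_samples (length X) m))"

end

theory Submission
  imports Defs
begin
lemma hoeff_fin:
  fixes x :: "'a \<Rightarrow> real"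
  assumes I: "finite I" "I \<noteq> {}" and ab: "\<forall>i\<in>I. a \<le> x i \<and> x i \<le> b" and l: "l \<ge> 0"
  shows "(\<Sum>i\<in>I. exp (l * (x i - (\<Sum>j\<in>I. x j)/card I))) \<le> card I * exp (l^2*(b-a)^2/8)"
proof (cases "l = 0")
  case True then show ?thesis by simp
next
  case False
  interpret P: interval_bounded_random_variable "measure_pmf (pmf_of_set I)" x a b
    by unfold_locales (auto simp: AE_measure_pmf_iff I ab)
  have E: "measure_pmf.expectation (pmf_of_set I) x = (\<Sum>j\<in>I. x j)/card I" by (simp add: integral_pmf_of_set I)
  have "nn_integral (measure_pmf (pmf_of_set I)) (\<lambda>y. exp (l*(x y - measure_pmf.expectation (pmf_of_set I) x))) \<le> ennreal(exp (l^2*(b-a)^2/8))"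
    by (rule P.Hoeffdings_lemma_nn_integral) (use l False in auto)
  hence "(\<Sum>i\<in>I. ennreal (exp (l * (x i - (\<Sum>j\<in>I. x j)/card I)))) / ennreal (card I) \<le> ennreal(exp (l^2*(b-a)^2/8))"
    unfolding E using I by (simp add: nn_integral_pmf_of_set ennreal_of_nat_eq_real_of_nat)
  also have "(\<Sum>i\<in>I. ennreal (exp (l * (x i - (\<Sum>j\<in>I. x j)/card I)))) = ennreal (\<Sum>i\<in>I. exp (l * (x i - (\<Sum>j\<in>I. x j)/card I)))"
    by (rule sum_ennreal) simp
  also have "\<dots> / ennreal (card I) = ennreal ((\<Sum>i\<in>I. exp (l * (x i - (\<Sum>j\<in>I. x j)/card I))) / card I)"
    using I by (intro divide_ennreal) (auto simp: sum_nonneg card_gt_0_iff)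
  finally have "ennreal ((\<Sum>i\<in>I. exp (l * (x i - (\<Sum>j\<in>I. x j)/card I))) / card I) \<le> ennreal(exp (l^2*(b-a)^2/8))" .
  hence "(\<Sum>i\<in>I. exp (l * (x i - (\<Sum>j\<in>I. x j)/card I))) / card I \<le> exp (l^2*(b-a)^2/8)"
    by (simp add: ennreal_le_iff)
  thus ?thesis using I by (simp add: divide_le_eq card_gt_0_iff mult.commute)
qed
fun W :: "nat \<Rightarrow> nat \<Rightarrow> real" where
  "W n 0 = 0"
| "W n (Suc m) = (real (n - Suc m) / real (n - 1))^2 + W (n-1) m"

definition avg :: "'a set \<Rightarrow> ('a \<Rightarrow> real) \<Rightarrow> real" where
  "avg I x = (\<Sum>j\<in>I. x j) / card I"

lemma sum_list_minus_const: "sum_list (map (\<lambda>j. f j - c) xs) = sum_list (map f xs) - length xs * (c::real)"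
  by (induction xs) (auto simp: algebra_simps)

lemma sum_list_neg_aux: "sum_list (map (\<lambda>i. (c::real) - f i) ys) = - sum_list (map (\<lambda>i. f i - c) ys)"
  by (induction ys) auto

lemma sum_perms_split:
  assumes "finite I" "I \<noteq> {}"
  shows "(\<Sum>p\<in>permutations_of_set I. g p) = (\<Sum>i\<in>I. \<Sum>r\<in>permutations_of_set (I - {i}). g (i # r))"
proof -
  have "(\<Sum>p\<in>permutations_of_set I. g p) = (\<Sum>p\<in>(\<Union>i\<in>I. (#) i ` permutations_of_set (I - {i})). g p)"
    using assms by (simp add: permutations_of_set_nonempty)
  also have "\<dots> = (\<Sum>i\<in>I. \<Sum>p\<in>(#) i ` permutations_of_set (I - {i}). g p)"
    using assms by (intro sum.UNION_disjoint) auto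
  also have "\<dots> = (\<Sum>i\<in>I. \<Sum>r\<in>permutations_of_set (I - {i}). g (i # r))"
    by (rule sum.cong[OF refl], subst sum.reindex) (auto simp: inj_on_def)
  finally show ?thesis .
qed

lemma main:
  fixes x :: "'a \<Rightarrow> real"
  assumes "finite I" "\<forall>i\<in>I. a \<le> x i \<and> x i \<le> b" "m \<le> card I" "l \<ge> 0"
  shows "(\<Sum>p\<in>permutations_of_set I. exp (l * sum_list (map (\<lambda>i. x i - avg I x) (take m p))))
           \<le> fact (card I) * exp (l^2*(b-a)^2 * W (card I) m / 8)"
  using assms
proof (induction m arbitrary: I)
  case 0
  then show ?case by simp
next
  case (Suc m)
  define n where "n = card I"
  define \<mu> where "\<mu> = avg I x"
  define c where "c = real (n - Suc m) / real (n - 1)"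
  have fin: "finite I" and ne: "I \<noteq> {}" and n1: "n \<ge> 1" and mn: "m \<le> n - 1"
    using Suc.prems by (auto simp: n_def)
  have c0: "c \<ge> 0" by (simp add: c_def)
  have cardI: "card (I - {i}) = n - 1" if "i \<in> I" for i using that fin by (simp add: n_def)
  define S' where "S' i r = sum_list (map (\<lambda>j. x j - avg (I - {i}) x) (take m r))" for i r
  have key: "sum_list (map (\<lambda>j. x j - \<mu>) (take (Suc m) (i # r))) = c * (x i - \<mu>) + S' i r"
    if i: "i \<in> I" and r: "r \<in> permutations_of_set (I - {i})" for i r
  proof -
    have lr0: "length r = n - 1"
      using r i fin by (simp add: length_finite_permutations_of_set cardI n_def)
    have lr: "length (take m r) = m" "min (length r) m = m"
      using lr0 mn by auto
    have "sum_list (map (\<lambda>j. x j - \<mu>) (take (Suc m) (i # r))) = (x i - \<mu>) + sum_list (map x (take m r)) - m * \<mu>"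
      by (simp add: sum_list_minus_const lr)
    also have "sum_list (map x (take m r)) = S' i r + m * avg (I - {i}) x"
      by (simp add: S'_def sum_list_minus_const lr)
    finally have e: "sum_list (map (\<lambda>j. x j - \<mu>) (take (Suc m) (i # r))) = (x i - \<mu>) + S' i r + m * (avg (I - {i}) x - \<mu>)"
      by (simp add: algebra_simps)
    show ?thesis
    proof (cases "n = 1")
      case True
      hence "I = {i}" using i fin unfolding n_def by (metis card_1_singletonE singletonD)
      hence "x i - \<mu> = 0" by (simp add: \<mu>_def avg_def)
      moreover have "m = 0" using mn True by simp
      ultimately show ?thesis using e by simp
    next
      case False
      hence n2: "n \<ge> 2" using n1 by simp
      have sI: "(\<Sum>j\<in>I. x j) = x i + (\<Sum>j\<in>I - {i}. x j)" using i fin by (simp add: sum.remove)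
      have E: "avg (I - {i}) x - \<mu> = (\<mu> - x i) / (real n - 1)"
        using n2 i fin unfolding avg_def \<mu>_def sI
        by (simp add: cardI n_def[symmetric] of_nat_diff field_simps)
      have "m * (avg (I - {i}) x - \<mu>) = m * ((\<mu> - x i) / (real n - 1))" by (simp only: E)
      also have "\<dots> = - (m / (real n - 1)) * (x i - \<mu>)" by (simp add: diff_divide_distrib algebra_simps)
      finally have M: "m * (avg (I - {i}) x - \<mu>) = - (m / (real n - 1)) * (x i - \<mu>)" .
      have C: "c = 1 - m / (real n - 1)" using n2 mn Suc.prems(3) unfolding c_def n_def[symmetric]
        by (simp add: of_nat_diff field_simps)
      show ?thesis unfolding e M C left_diff_distrib mult_1_left mult_minus_left by linarith
    qed
  qed
  have "(\<Sum>p\<in>permutations_of_set I. exp (l * sum_list (map (\<lambda>i. x i - avg I x) (take (Suc m) p))))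
      = (\<Sum>i\<in>I. \<Sum>r\<in>permutations_of_set (I - {i}). exp (l * sum_list (map (\<lambda>j. x j - \<mu>) (take (Suc m) (i # r)))))"
    unfolding \<mu>_def by (rule sum_perms_split[OF fin ne])
  also have "\<dots> = (\<Sum>i\<in>I. exp (l * c * (x i - \<mu>)) * (\<Sum>r\<in>permutations_of_set (I - {i}). exp (l * S' i r)))"
  proof (rule sum.cong[OF refl])
    fix i assume i: "i \<in> I"
    show "(\<Sum>r\<in>permutations_of_set (I - {i}). exp (l * sum_list (map (\<lambda>j. x j - \<mu>) (take (Suc m) (i # r)))))
          = exp (l * c * (x i - \<mu>)) * (\<Sum>r\<in>permutations_of_set (I - {i}). exp (l * S' i r))"
      unfolding sum_distrib_left
    proof (rule sum.cong[OF refl])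
      fix r assume "r \<in> permutations_of_set (I - {i})"
      from key[OF i this] show "exp (l * sum_list (map (\<lambda>j. x j - \<mu>) (take (Suc m) (i # r)))) = exp (l * c * (x i - \<mu>)) * exp (l * S' i r)"
        by (simp only: distrib_left exp_add mult.assoc)
    qed
  qed
  also have "\<dots> \<le> (\<Sum>i\<in>I. exp (l * c * (x i - \<mu>)) * (fact (n - 1) * exp (l^2*(b-a)^2 * W (n - 1) m / 8)))"
  proof (intro sum_mono mult_left_mono)
    fix i assume i: "i \<in> I"
    show "(\<Sum>r\<in>permutations_of_set (I - {i}). exp (l * S' i r)) \<le> fact (n - 1) * exp (l^2*(b-a)^2 * W (n - 1) m / 8)"
      using Suc.IH[of "I - {i}"] Suc.prems i fin mn unfolding S'_def by (simp add: cardI n_def)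
  qed simp
  also have "\<dots> = (\<Sum>i\<in>I. exp ((l * c) * (x i - avg I x))) * (fact (n - 1) * exp (l^2*(b-a)^2 * W (n - 1) m / 8))"
    unfolding \<mu>_def by (rule sum_distrib_right[symmetric])
  also have "\<dots> \<le> (n * exp ((l*c)^2*(b-a)^2/8)) * (fact (n - 1) * exp (l^2*(b-a)^2 * W (n - 1) m / 8))"
    using hoeff_fin[OF fin ne Suc.prems(2), of "l*c"] Suc.prems(4) c0
    by (intro mult_right_mono) (auto simp: avg_def n_def)
  also have "\<dots> = fact n * exp (l^2*(b-a)^2 * W n (Suc m) / 8)"
  proof -
    have f: "fact n = real n * fact (n - 1)" using n1 by (simp add: fact_reduce)
    have w: "W n (Suc m) = c^2 + W (n - 1) m" by (simp add: c_def)
    have "(l*c)^2*(b-a)^2/8 + l^2*(b-a)^2 * W (n - 1) m / 8 = l^2*(b-a)^2 * W n (Suc m) / 8"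
      unfolding w by (simp add: power_mult_distrib algebra_simps add_divide_distrib)
    hence "exp ((l*c)^2*(b-a)^2/8) * exp (l^2*(b-a)^2 * W (n - 1) m / 8) = exp (l^2*(b-a)^2 * W n (Suc m) / 8)"
      by (simp flip: exp_add)
    thus ?thesis unfolding f by (simp only: mult_ac)
  qed
  finally show ?case by (simp add: n_def)
qed

lemma W_alg:
  fixes k d m :: real
  assumes "k > 0" "d \<ge> 0" "m \<ge> 0" "k = m + d"
  shows "(d/k)^2 + m*(d+1)/k \<le> (m+1)*(d+1)/(k+1)"
proof -
  have poly: "(m+1)*(d+1)*k^2 - (d^2*(k+1) + m*(d+1)*k*(k+1)) = d*m"
    unfolding assms(4) by (simp add: algebra_simps power2_eq_square)
  have kk: "k \<noteq> 0" "k + 1 \<noteq> 0" "k*k + k*(k*k) \<noteq> 0" using assms(1) by (auto simp: add_pos_pos) (metis add_pos_pos less_irrefl mult_pos_pos)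
  have L: "(d/k)^2 + m*(d+1)/k = (d^2*(k+1) + m*(d+1)*k*(k+1)) / (k^2*(k+1))"
    using kk by (simp add: field_simps power2_eq_square)
  have R: "(m+1)*(d+1)/(k+1) = ((m+1)*(d+1)*k^2) / (k^2*(k+1))"
    using kk by (simp add: field_simps power2_eq_square)
  have "d^2*(k+1) + m*(d+1)*k*(k+1) \<le> (m+1)*(d+1)*k^2" using poly assms by (simp add: algebra_simps)
  hence "(d^2*(k+1) + m*(d+1)*k*(k+1)) / (k^2*(k+1)) \<le> ((m+1)*(d+1)*k^2) / (k^2*(k+1))"
    using assms(1) by (intro divide_right_mono) auto
  thus ?thesis unfolding L R .
qed

lemma W_bound: "m \<le> n \<Longrightarrow> 1 \<le> n \<Longrightarrow> W n m \<le> real m * (real n + 1 - real m) / real n"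
proof (induction m arbitrary: n)
  case 0
  then show ?case by simp
next
  case (Suc m)
  show ?case
  proof (cases "m = 0")
    case True
    then show ?thesis using Suc.prems
      by (cases "n = 1") (auto simp: power_divide)
  next
    case False
    have IH: "W (n-1) m \<le> real m * (real (n-1) + 1 - real m) / real (n-1)"
      using Suc.IH[of "n-1"] Suc.prems False by simp
    have "W n (Suc m) = (real (n - Suc m) / real (n - 1))^2 + W (n-1) m" by simp
    also have "\<dots> \<le> (real (n - Suc m) / real (n - 1))^2 + real m * (real (n-1) + 1 - real m) / real (n-1)"
      using IH by simp
    also have "\<dots> = (real (n - Suc m) / real (n - 1))^2 + real m * (real (n - Suc m) + 1) / real (n-1)"
      using Suc.prems by (simp add: of_nat_diff)
    also have "\<dots> \<le> (real m + 1) * (real (n - Suc m) + 1) / (real (n-1) + 1)"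
      by (rule W_alg) (use Suc.prems False in \<open>auto simp: of_nat_diff\<close>)
    also have "\<dots> = real (Suc m) * (real n + 1 - real (Suc m)) / real n"
      using Suc.prems by (simp add: of_nat_diff)
    finally show ?thesis .
  qed
qed

lemma count_take:
  assumes "finite U" "m \<le> card U"
  shows "card {p \<in> permutations_of_set U. take m p \<in> B}
       = card {xs \<in> B. length xs = m \<and> distinct xs \<and> set xs \<subseteq> U} * fact (card U - m)"
proof -
  define T where "T = {xs \<in> B. length xs = m \<and> distinct xs \<and> set xs \<subseteq> U}"
  have eq: "{p \<in> permutations_of_set U. take m p \<in> B} = (\<Union>xs\<in>T. (\<lambda>r. xs @ r) ` permutations_of_set (U - set xs))"
  proof (intro equalityI subsetI)
    fix p assume p: "p \<in> {p \<in> permutations_of_set U. take m p \<in> B}"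
    hence sp: "set p = U" "distinct p" "take m p \<in> B" by (auto simp: permutations_of_set_def)
    have lp: "length p = card U" using sp by (metis distinct_card)
    have "take m p \<in> T" using sp lp assms(2) by (auto simp: T_def dest: in_set_takeD)
    moreover have "drop m p \<in> permutations_of_set (U - set (take m p))"
    proof
      show "distinct (drop m p)" using sp by simp
      have "set (take m p) \<union> set (drop m p) = U" using sp by (metis append_take_drop_id set_append)
      moreover have "set (take m p) \<inter> set (drop m p) = {}"
        using sp by (metis append_take_drop_id distinct_append)
      ultimately show "set (drop m p) = U - set (take m p)" by blast
    qed
    ultimately show "p \<in> (\<Union>xs\<in>T. (\<lambda>r. xs @ r) ` permutations_of_set (U - set xs))"
      by (intro UN_I[of "take m p"] image_eqI[of _ _ "drop m p"]) auto
  next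
    fix p assume "p \<in> (\<Union>xs\<in>T. (\<lambda>r. xs @ r) ` permutations_of_set (U - set xs))"
    then obtain xs r where xs: "xs \<in> T" and r: "r \<in> permutations_of_set (U - set xs)" and p: "p = xs @ r" by auto
    have "set p = U" using xs r p by (auto simp: T_def permutations_of_set_def)
    moreover have "distinct p" using xs r p by (auto simp: T_def permutations_of_set_def)
    moreover have "take m p = xs" using xs p by (simp add: T_def)
    ultimately show "p \<in> {p \<in> permutations_of_set U. take m p \<in> B}" using xs by (auto simp: T_def)
  qed
  have finT: "finite T"
  proof (rule finite_subset)
    show "T \<subseteq> {xs. set xs \<subseteq> U \<and> length xs = m}" by (auto simp: T_def)
    show "finite {xs. set xs \<subseteq> U \<and> length xs = m}" using assms(1) by (rule finite_lists_length_eq)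
  qed
  have "card {p \<in> permutations_of_set U. take m p \<in> B} = (\<Sum>xs\<in>T. card ((\<lambda>r. xs @ r) ` permutations_of_set (U - set xs)))"
    unfolding eq using finT by (intro card_UN_disjoint) (auto simp: T_def dest: arg_cong[of _ _ "take m"])
  also have "\<dots> = (\<Sum>xs\<in>T. fact (card U - m))"
  proof (rule sum.cong[OF refl])
    fix xs assume xs: "xs \<in> T"
    have "card ((\<lambda>r. xs @ r) ` permutations_of_set (U - set xs)) = card (permutations_of_set (U - set xs))"
      by (rule card_image) (auto simp: inj_on_def)
    also have "\<dots> = fact (card U - m)" using xs assms(1)
      by (simp add: T_def card_Diff_subset distinct_card)
    finally show "card ((\<lambda>r. xs @ r) ` permutations_of_set (U - set xs)) = fact (card U - m)" .
  qed
  finally show ?thesis by (simp add: T_def)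
qed

lemma count_le_exp:
  fixes g :: "'b \<Rightarrow> real"
  assumes "finite P" "l \<ge> 0"
  shows "real (card {p \<in> P. g p > t}) \<le> (\<Sum>p\<in>P. exp (l * g p)) * exp (- l * t)"
proof -
  have "real (card {p \<in> P. g p > t}) = (\<Sum>p\<in>P. if g p > t then 1 else 0)"
    using assms(1) by (simp add: sum.If_cases Int_def)
  also have "\<dots> \<le> (\<Sum>p\<in>P. exp (l * g p) * exp (- l * t))"
  proof (rule sum_mono)
    fix p assume "p \<in> P"
    show "(if g p > t then 1 else 0) \<le> exp (l * g p) * exp (- l * t)"
    proof (cases "g p > t")
      case True
      hence "l * g p + - l * t \<ge> 0" using assms(2) by (simp add: algebra_simps mult_left_mono)
      hence "1 \<le> exp (l * g p + - l * t)" by simp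
      also have "exp (l * g p + - l * t) = exp (l * g p) * exp (- l * t)" by (rule exp_add)
      finally show ?thesis using True by simp
    qed simp
  qed
  also have "\<dots> = (\<Sum>p\<in>P. exp (l * g p)) * exp (- l * t)" by (simp add: sum_distrib_right)
  finally show ?thesis .
qed

lemma chernoff_final:
  fixes K F B u m \<epsilon> \<delta> a b :: real
  assumes "0 < B" "F \<ge> 0" "\<epsilon> > 0" "a < b" "0 < \<delta>" "u = (ln (1/\<delta>)/2)*(b-a)^2/\<epsilon>^2" "u * B \<le> m^2" "m > 0"
    and K: "\<And>l. l \<ge> 0 \<Longrightarrow> K \<le> F * exp (l^2*(b-a)^2*B/8 - l*m*\<epsilon>)"
  shows "K \<le> \<delta> * F"
proof -
  define D where "D = (b-a)^2"
  have D: "D > 0" using assms by (simp add: D_def)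
  define l where "l = 4*m*\<epsilon>/(D*B)"
  have l0: "l \<ge> 0" using assms D by (simp add: l_def)
  have e0: "l^2*D*B/8 - l*m*\<epsilon> = -2*m^2*\<epsilon>^2/(D*B)"
    using assms D by (simp add: l_def field_simps power2_eq_square)
  have e1: "l^2*(b-a)^2*B/8 - l*m*\<epsilon> = -2*m^2*\<epsilon>^2/((b-a)^2*B)"
    using e0 by (simp add: D_def)
  have "ln (1/\<delta>) * (b-a)^2 * B / (2*\<epsilon>^2) \<le> m^2" using assms(6,7) by (simp add: field_simps)
  hence "ln (1/\<delta>) \<le> 2*m^2*\<epsilon>^2/((b-a)^2*B)" using assms by (simp add: field_simps)
  hence "-2*m^2*\<epsilon>^2/((b-a)^2*B) \<le> ln \<delta>" using assms by (simp add: ln_div)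
  hence "exp (l^2*(b-a)^2*B/8 - l*m*\<epsilon>) \<le> \<delta>" unfolding e1 using assms
    by (metis exp_le_cancel_iff exp_ln)
  hence "F * exp (l^2*(b-a)^2*B/8 - l*m*\<epsilon>) \<le> F * \<delta>" using assms(2) by (rule mult_left_mono)
  with K[OF l0] show ?thesis by (simp add: mult.commute)
qed


theorem lemma1:
  fixes X :: "real list" and N m :: nat and a b \<epsilon> \<delta> :: real
  assumes "N > 1" and "length X = N" and "a < b"
    and "\<forall>x\<in>set X. a \<le> x \<and> x \<le> b"
    and "0 < \<epsilon>" and "\<epsilon> < 1" and "0 < \<delta>" and "\<delta> < 1"
    and "1 \<le> m" and "m < N"
    and "real m \<ge> min
          (((ln (1/\<delta>) / 2) * (b - a)^2 / \<epsilon>^2 + 1) / (1 + ((ln (1/\<delta>) / 2) * (b - a)^2 / \<epsilon>^2) / real N))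
          (((ln (1/\<delta>) / 2) * (b - a)^2 / \<epsilon>^2 + ((ln (1/\<delta>) / 2) * (b - a)^2 / \<epsilon>^2) / real N)
             / (1 + ((ln (1/\<delta>) / 2) * (b - a)^2 / \<epsilon>^2) / real N))"
  shows "measure_pmf.prob (sample_wor X m)
           {S. (1 / real m) * sum_list S - (1 / real N) * sum_list X \<le> \<epsilon>} \<ge> 1 - \<delta>"
proof -
  define u where "u = (ln (1/\<delta>) / 2) * (b - a)^2 / \<epsilon>^2"
  define U where "U = {..<N}"
  define x where "x = (\<lambda>i. X ! i)"
  define \<mu> where "\<mu> = avg U x"
  define P where "P = permutations_of_set U"
  define g where "g = (\<lambda>ys. sum_list (map (\<lambda>i. x i - \<mu>) ys))"
  define G where "G = {is. (1 / real m) * sum_list (map (\<lambda>i. X ! i) is) - (1 / real N) * sum_list X \<le> \<epsilon>}"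
  define bad where "bad = {p \<in> P. g (take m p) > m * \<epsilon>}"
  have finU: "finite U" and cardU: "card U = N" by (auto simp: U_def)
  have finP: "finite P" by (simp add: P_def)
  have cardP: "card P = fact N" by (simp add: P_def finU cardU)
  have xab: "\<forall>i\<in>U. a \<le> x i \<and> x i \<le> b" using assms(2,4) by (auto simp: U_def x_def)
  have sumX: "sum_list X = (\<Sum>i\<in>U. x i)"
    using assms(2) by (simp add: U_def x_def sum_list_sum_nth atLeast0LessThan)
  have Npos: "real N > 0" using assms(1) by simp
  have \<mu>_eq: "\<mu> = sum_list X / N" by (simp add: \<mu>_def avg_def sumX cardU)
  have m0: "real m > 0" using assms by simp
  have lenP: "length p = N" if "p \<in> P" for p
    using that by (simp add: P_def length_finite_permutations_of_set cardU)
  define idx where "idx = index_samples N m"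
  have idx_eq: "idx = {xs. set xs \<subseteq> U \<and> length xs = m \<and> distinct xs}"
    by (auto simp: idx_def index_samples_def U_def)
  have fin_idx: "finite idx" unfolding idx_eq
    by (rule finite_subset[OF _ finite_lists_length_eq[OF finU, of m]]) auto
  have ne_idx: "idx \<noteq> {}"
  proof -
    have "[0..<m] \<in> idx" using assms(10) by (auto simp: idx_eq U_def)
    thus ?thesis by auto
  qed
  have c1: "card {p \<in> P. take m p \<in> G} = card (idx \<inter> G) * fact (N - m)"
  proof -
    have "{xs \<in> G. length xs = m \<and> distinct xs \<and> set xs \<subseteq> U} = idx \<inter> G" by (auto simp: idx_eq)
    thus ?thesis using count_take[OF finU, of m G] assms(10) by (simp add: P_def cardU)
  qed
  have c2: "card P = card idx * fact (N - m)"
  proof -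
    have "{xs \<in> UNIV. length xs = m \<and> distinct xs \<and> set xs \<subseteq> U} = idx" by (auto simp: idx_eq)
    moreover have "{p \<in> P. take m p \<in> UNIV} = P" by simp
    ultimately show ?thesis using count_take[OF finU, of m UNIV] assms(10) by (simp add: P_def cardU)
  qed
  have prob: "measure_pmf.prob (sample_wor X m)
           {S. (1 / real m) * sum_list S - (1 / real N) * sum_list X \<le> \<epsilon>} = real (card {p \<in> P. take m p \<in> G}) / fact N"
  proof -
    have "measure_pmf.prob (sample_wor X m)
           {S. (1 / real m) * sum_list S - (1 / real N) * sum_list X \<le> \<epsilon>}
        = measure_pmf.prob (pmf_of_set idx) G"
      unfolding sample_wor_def measure_map_pmf idx_def[symmetric] assms(2) G_def by (simp add: vimage_def)
    also have "\<dots> = real (card (idx \<inter> G)) / real (card idx)"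
      using fin_idx ne_idx by (simp add: measure_pmf_of_set)
    also have "\<dots> = real (card {p \<in> P. take m p \<in> G}) / fact N"
    proof -
      have f: "(fact N :: real) = real (card idx) * fact (N - m)"
        using c2 cardP by (metis of_nat_fact of_nat_mult)
      have ci: "real (card idx) > 0" using fin_idx ne_idx by (simp add: card_gt_0_iff)
      have "(fact (N - m) :: real) > 0" by simp
      thus ?thesis unfolding f c1 using ci by (simp add: field_simps)
    qed
    finally show ?thesis .
  qed
  have bad_iff: "take m p \<notin> G \<longleftrightarrow> g (take m p) > m * \<epsilon>" if p: "p \<in> P" for p
  proof -
    have lt: "length (take m p) = m" using lenP[OF p] assms(10) by simp
    have gt: "g (take m p) = sum_list (map (\<lambda>i. X ! i) (take m p)) - m * \<mu>"
      unfolding g_def sum_list_minus_const lt by (simp add: x_def)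
    show ?thesis unfolding G_def gt \<mu>_eq using m0 Npos
      by (auto simp: field_simps)
  qed
  have split: "card {p \<in> P. take m p \<in> G} + card bad = card P"
  proof -
    have "bad = {p \<in> P. take m p \<notin> G}" using bad_iff by (auto simp: bad_def)
    hence "card {p \<in> P. take m p \<in> G} + card bad = card ({p \<in> P. take m p \<in> G} \<union> bad)"
      using finP by (intro card_Un_disjoint[symmetric]) auto
    also have "{p \<in> P. take m p \<in> G} \<union> bad = P" using bad_iff by (auto simp: bad_def)
    finally show ?thesis .
  qed
  have u0: "u \<ge> 0" using assms by (simp add: u_def)
  have ab2: "(b - a)^2 \<ge> 0" by simp
  have badle: "real (card bad) \<le> \<delta> * fact N"
  proof -
    from assms(11) have "(u + 1) / (1 + u / N) \<le> m \<or> (u + u / N) / (1 + u / N) \<le> m"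
      unfolding u_def[symmetric] by linarith
    thus ?thesis
    proof
      assume A: "(u + 1) / (1 + u / N) \<le> m"
      define Bd where "Bd = real (N - m) * (real m + 1) / N"
      have Bd0: "Bd > 0" using assms Npos by (simp add: Bd_def)
      have "u + 1 \<le> m * (1 + u / N)" using A u0 Npos by (simp add: field_simps)
      hence "u * (real N - real m) \<le> real N * (real m - 1)" using Npos by (simp add: field_simps)
      hence "u * (real N - real m) * (real m + 1) \<le> real N * (real m - 1) * (real m + 1)" using m0 by (intro mult_right_mono) auto
      hence "u * Bd \<le> (real m - 1) * (real m + 1)" using Npos assms(10) by (simp add: Bd_def field_simps of_nat_diff)
      hence uB: "u * Bd \<le> (real m)^2" by (simp add: algebra_simps power2_eq_square)
      define x' where "x' = (\<lambda>i. - x i)"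
      define g' where "g' = (\<lambda>ys. sum_list (map (\<lambda>i. x' i - avg U x') ys))"
      have avg': "avg U x' = - \<mu>" by (simp add: x'_def \<mu>_def avg_def sum_negf)
      have gg: "g (take m p) = g' (take (N - m) (rev p))" if p: "p \<in> P" for p
      proof -
        have d: "distinct p" "set p = U" using p by (auto simp: P_def permutations_of_set_def)
        have "g p = (\<Sum>i\<in>U. x i - \<mu>)" unfolding g_def using d by (simp add: sum_list_distinct_conv_sum_set)
        also have "\<dots> = 0" using assms(1) by (simp add: sum_subtractf \<mu>_def avg_def cardU)
        finally have g0: "g p = 0" .
        have "g p = g (take m p) + g (drop m p)"
          unfolding g_def by (metis append_take_drop_id map_append sum_list_append)
        moreover have "take (N - m) (rev p) = rev (drop m p)" using lenP[OF p] by (simp add: rev_drop)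
        moreover have "g' (rev (drop m p)) = - g (drop m p)"
          unfolding g'_def g_def avg' by (simp add: x'_def rev_map[symmetric] sum_list_rev sum_list_neg_aux)
        ultimately show ?thesis using g0 by simp
      qed
      have "bad = {p \<in> P. g' (take (N - m) (rev p)) > m * \<epsilon>}" using gg by (auto simp: bad_def)
      hence K: "real (card bad) \<le> fact N * exp (l^2*(b-a)^2*Bd/8 - l*m*\<epsilon>)" if l: "l \<ge> 0" for l
      proof -
        assume eq: "bad = {p \<in> P. g' (take (N - m) (rev p)) > m * \<epsilon>}"
        have "real (card bad) \<le> (\<Sum>p\<in>P. exp (l * g' (take (N - m) (rev p)))) * exp (- l * (m * \<epsilon>))"
          unfolding eq by (rule count_le_exp[OF finP l])
        also have "(\<Sum>p\<in>P. exp (l * g' (take (N - m) (rev p)))) = (\<Sum>p\<in>P. exp (l * g' (take (N - m) p)))"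
        proof -
          have "(\<Sum>p\<in>P. exp (l * g' (take (N - m) p))) = (\<Sum>p\<in>rev ` P. exp (l * g' (take (N - m) p)))"
            by (simp add: P_def)
          also have "\<dots> = (\<Sum>p\<in>P. exp (l * g' (take (N - m) (rev p))))"
            by (subst sum.reindex) (auto simp: inj_on_def)
          finally show ?thesis by simp
        qed
        also have "(\<Sum>p\<in>P. exp (l * g' (take (N - m) p))) \<le> fact N * exp (l^2*((-a) - (-b))^2 * W N (N - m) / 8)"
          using main[OF finU, of "-b" x' "-a" "N - m" l] xab l cardU unfolding g'_def P_def x'_def by auto
        also have "\<dots> \<le> fact N * exp (l^2*(b-a)^2 * Bd / 8)"
        proof -
          have "W N (N - m) \<le> real (N - m) * (real N + 1 - real (N - m)) / real N"
            using assms by (intro W_bound) auto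
          also have "\<dots> = Bd" using assms by (simp add: Bd_def of_nat_diff)
          finally have "W N (N - m) \<le> Bd" .
          hence "l^2*(b-a)^2 * W N (N - m) / 8 \<le> l^2*(b-a)^2 * Bd / 8"
            by (intro divide_right_mono mult_left_mono) auto
          thus ?thesis by (simp add: power2_commute)
        qed
        finally show ?thesis
          by (simp add: mult.assoc exp_add[symmetric] mult_right_mono)
      qed
      show ?thesis
        by (rule chernoff_final[OF Bd0 _ assms(5) assms(3) assms(7) u_def uB m0 K]) simp
    next
      assume B: "(u + u / N) / (1 + u / N) \<le> m"
      define Bc where "Bc = real m * (real N + 1 - real m) / N"
      have Bc0: "Bc > 0" using assms Npos by (simp add: Bc_def)
      have pos: "1 + u / N > 0" using u0 Npos by (simp add: add_pos_nonneg)
      have "u + u / N \<le> m * (1 + u / N)" using B pos by (simp add: pos_divide_le_eq mult.commute)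
      hence "real N * (u + u / N) \<le> real N * (m * (1 + u / N))" using Npos by (intro mult_left_mono) auto
      moreover have "real N * (u + u / N) = u * real N + u" "real N * (m * (1 + u / N)) = m * real N + m * u"
        using Npos by (simp_all add: field_simps)
      ultimately have "u * (real N + 1 - real m) \<le> real m * real N" by (simp add: algebra_simps)
      hence "u * (real N + 1 - real m) * real m \<le> real m * real N * real m" using m0 by (intro mult_right_mono) auto
      hence uB: "u * Bc \<le> (real m)^2" using Npos by (simp add: Bc_def field_simps power2_eq_square)
      have K: "real (card bad) \<le> fact N * exp (l^2*(b-a)^2*Bc/8 - l*m*\<epsilon>)" if l: "l \<ge> 0" for l
      proof -
        have "real (card bad) \<le> (\<Sum>p\<in>P. exp (l * g (take m p))) * exp (- l * (m * \<epsilon>))"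
          unfolding bad_def by (rule count_le_exp[OF finP l])
        also have "(\<Sum>p\<in>P. exp (l * g (take m p))) \<le> fact N * exp (l^2*(b-a)^2 * W N m / 8)"
          using main[OF finU, of a x b m l] xab l cardU assms(10) unfolding g_def P_def \<mu>_def by auto
        also have "\<dots> \<le> fact N * exp (l^2*(b-a)^2 * Bc / 8)"
        proof -
          have "W N m \<le> Bc" unfolding Bc_def using assms by (intro W_bound) auto
          hence "l^2*(b-a)^2 * W N m / 8 \<le> l^2*(b-a)^2 * Bc / 8"
            by (intro divide_right_mono mult_left_mono) auto
          thus ?thesis by simp
        qed
        finally show ?thesis
          by (simp add: mult.assoc exp_add[symmetric] mult_right_mono)
      qed
      show ?thesis
        by (rule chernoff_final[OF Bc0 _ assms(5) assms(3) assms(7) u_def uB m0 K]) simp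
    qed
  qed
  have "real (card {p \<in> P. take m p \<in> G}) = fact N - real (card bad)"
    using split cardP by (metis add_diff_cancel_right' of_nat_add of_nat_fact)
  hence "real (card {p \<in> P. take m p \<in> G}) / fact N \<ge> (fact N - \<delta> * fact N) / fact N"
    using badle by (intro divide_right_mono) auto
  also have "(fact N - \<delta> * fact N) / fact N = 1 - \<delta>" by (simp add: field_simps)
  finally show ?thesis unfolding prob .
qed

end
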